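(* Let $\mathcal{N}$ be a Nash equilibrium of $\mathcal{G}_t$ for some $t\in[0,1]$ in which $\Pr[s^r_0]<1$ and $\Pr[s^c_0]<1$. Let $\mathcal{P}$ be the pair of probability distributions over $\{s^r_1,\dots,s^r_n\}$ and $\{s^c_1,\dots,s^c_n\}$ obtained by dividing each $\Pr[s^i_j]$ ($i\in\{r,c\}$, $1\le j\le n$) by $1-\Pr[s^i_0]$. Then $\mathcal{P}$ is a Nash equilibrium of the version of $\mathcal{G}$ in which the column player receives an additional bonus of $\delta\Pr[s^r_0]/(1-\Pr[s^r_0])$ for playing $s^c_k$.
   Context: $\mathcal{G}$ is an $n\times n$ two-player game, with row strategies $s^r_1,\dots,s^r_n$ and column strategies $s^c_1,\dots,s^c_n$, whose payoffs lie in $[0.9,1.1]$; $k\in\{1,\dots,n\}$ is a fixed index and $\delta>0$ a constant. $\mathcal{G}_0$ is the $(n+1)\times(n+1)$ game with strategies $s^r_0,\dots,s^r_n$ and $s^c_0,\dots,s^c_n$ in which each player gets $1$ for playing $s^r_0$ (resp. $s^c_0$) and $0$ for any other strategy. $\mathcal{G}_1$ is the $(n+1)\times(n+1)$ game with payoffs (row, column): $(s^r_0,s^c_0)\mapsto(0,-1)$; $(s^r_0,s^c_j)\mapsto(0,\tfrac34)$ for $j\ge1$, $j\ne k$; $(s^r_0,s^c_k)\mapsto(0,\tfrac34+\delta)$; $(s^r_j,s^c_0)\mapsto(-1,\tfrac34)$ for $j\ge1$; and on $\{s^r_1,\dots,s^r_n\}\times\{s^c_1,\dots,s^c_n\}$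 the payoffs of $\mathcal{G}$. $\mathcal{G}_t=(1-t)\mathcal{G}_0+t\mathcal{G}_1$ (payoffs interpolated linearly). $\Pr[s]$ denotes the probability that the owner of pure strategy $s$ plays $s$ in $\mathcal{N}$. *)

theory Defs
  imports "HOL-Analysis.Analysis"
begin

text \<open>Bimatrix games with pure strategies indexed by natural numbers from a finite
  set; mixed strategies are functions nat => real (only their values on the
  strategy set matter).\<close>

definition mixed_strategy :: "nat set \<Rightarrow> (nat \<Rightarrow> real) \<Rightarrow> bool" where
  "mixed_strategy S p \<longleftrightarrow> (\<forall>i\<in>S. p i \<ge> 0) \<and> (\<Sum>i\<in>S. p i) = 1"

definition exp_payoff ::
  "nat set \<Rightarrow> nat set \<Rightarrow> (nat \<Rightarrow> nat \<Rightarrow> real) \<Rightarrow> (nat \<Rightarrow> real) \<Rightarrow> (nat \<Rightarrow> real) \<Rightarrow> real" where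
  "exp_payoff Sr Sc U x y = (\<Sum>i\<in>Sr. \<Sum>j\<in>Sc. x i * y j * U i j)"

definition nash_eq ::
  "nat set \<Rightarrow> nat set \<Rightarrow> (nat \<Rightarrow> nat \<Rightarrow> real) \<Rightarrow> (nat \<Rightarrow> nat \<Rightarrow> real)
     \<Rightarrow> (nat \<Rightarrow> real) \<Rightarrow> (nat \<Rightarrow> real) \<Rightarrow> bool" where
  "nash_eq Sr Sc Ur Uc x y \<longleftrightarrow>
     mixed_strategy Sr x \<and> mixed_strategy Sc y \<and>
     (\<forall>x'. mixed_strategy Sr x' \<longrightarrow> exp_payoff Sr Sc Ur x' y \<le> exp_payoff Sr Sc Ur x y) \<and>
     (\<forall>y'. mixed_strategy Sc y' \<longrightarrow> exp_payoff Sr Sc Uc x y' \<le> exp_payoff Sr Sc Uc x y)"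

definition G0_row :: "nat \<Rightarrow> nat \<Rightarrow> real" where
  "G0_row i j = (if i = 0 then 1 else 0)"
definition G0_col :: "nat \<Rightarrow> nat \<Rightarrow> real" where
  "G0_col i j = (if j = 0 then 1 else 0)"

definition G1_row :: "(nat \<Rightarrow> nat \<Rightarrow> real) \<Rightarrow> nat \<Rightarrow> nat \<Rightarrow> real" where
  "G1_row A i j = (if i = 0 then 0 else if j = 0 then -1 else A i j)"
definition G1_col :: "(nat \<Rightarrow> nat \<Rightarrow> real) \<Rightarrow> nat \<Rightarrow> real \<Rightarrow> nat \<Rightarrow> nat \<Rightarrow> real" where
  "G1_col B k \<delta> i j =
     (if i = 0 then (if j = 0 then -1 else if j = k then 3/4 + \<delta> else 3/4)
      else if j = 0 then 3/4 else B i j)"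

definition Gt_row :: "(nat \<Rightarrow> nat \<Rightarrow> real) \<Rightarrow> real \<Rightarrow> nat \<Rightarrow> nat \<Rightarrow> real" where
  "Gt_row A t i j = (1 - t) * G0_row i j + t * G1_row A i j"
definition Gt_col :: "(nat \<Rightarrow> nat \<Rightarrow> real) \<Rightarrow> nat \<Rightarrow> real \<Rightarrow> real \<Rightarrow> nat \<Rightarrow> nat \<Rightarrow> real" where
  "Gt_col B k \<delta> t i j = (1 - t) * G0_col i j + t * G1_col B k \<delta> i j"

end

theory Submission
  imports Defs
begin

lemma ep_row: "exp_payoff Sr Sc U x y = (\<Sum>i\<in>Sr. x i * (\<Sum>j\<in>Sc. y j * U i j))"
  by (simp add: exp_payoff_def sum_distrib_left mult.assoc mult.left_commute)

lemma ep_col: "exp_payoff Sr Sc U x y = (\<Sum>j\<in>Sc. y j * (\<Sum>i\<in>Sr. x i * U i j))"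
  unfolding exp_payoff_def
  by (subst sum.swap) (simp add: sum_distrib_left mult.assoc mult.left_commute mult.commute)

lemma split0: "(\<Sum>i\<in>{0..n::nat}. f i) = f 0 + (\<Sum>i\<in>{1..n}. f i)"
proof -
  have "{0..n} = insert 0 {1..n}" by auto
  then show ?thesis by simp
qed

theorem lemma2:
  fixes n k :: nat and A B :: "nat \<Rightarrow> nat \<Rightarrow> real" and \<delta> t :: real
    and x y :: "nat \<Rightarrow> real"
  assumes payA: "\<forall>i\<in>{1..n}. \<forall>j\<in>{1..n}. 0.9 \<le> A i j \<and> A i j \<le> 1.1"
    and payB: "\<forall>i\<in>{1..n}. \<forall>j\<in>{1..n}. 0.9 \<le> B i j \<and> B i j \<le> 1.1"
    and k: "k \<in> {1..n}"
    and delta: "\<delta> > 0"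
    and t: "t \<in> {0..1}"
    and NE: "nash_eq {0..n} {0..n} (Gt_row A t) (Gt_col B k \<delta> t) x y"
    and x0: "x 0 < 1" and y0: "y 0 < 1"
  shows "nash_eq {1..n} {1..n} A
           (\<lambda>i j. B i j + (if j = k then \<delta> * x 0 / (1 - x 0) else 0))
           (\<lambda>i. x i / (1 - x 0)) (\<lambda>j. y j / (1 - y 0))"
proof -
  let ?S = "{0..n::nat}" and ?S1 = "{1..n::nat}"
  have mx: "mixed_strategy ?S x" and my: "mixed_strategy ?S y"
    and brx: "\<And>x'. mixed_strategy ?S x' \<Longrightarrow> exp_payoff ?S ?S (Gt_row A t) x' y \<le> exp_payoff ?S ?S (Gt_row A t) x y"
    and bry: "\<And>y'. mixed_strategy ?S y' \<Longrightarrow> exp_payoff ?S ?S (Gt_col B k \<delta> t) x y' \<le> exp_payoff ?S ?S (Gt_col B k \<delta> t) x y"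
    using NE unfolding nash_eq_def by auto
  have xnn: "\<And>i. i \<in> ?S \<Longrightarrow> x i \<ge> 0" and ynn: "\<And>i. i \<in> ?S \<Longrightarrow> y i \<ge> 0"
    using mx my unfolding mixed_strategy_def by auto
  have xs1: "(\<Sum>i\<in>?S1. x i) = 1 - x 0" using mx unfolding mixed_strategy_def by (simp add: split0)
  have ys1: "(\<Sum>i\<in>?S1. y i) = 1 - y 0" using my unfolding mixed_strategy_def by (simp add: split0)
  have px: "1 - x 0 > 0" and py: "1 - y 0 > 0" using x0 y0 by auto
  have x00: "x 0 \<ge> 0" using xnn by auto
  have tpos: "t > 0"
  proof (rule ccontr)
    assume "\<not> t > 0"
    then have t0: "t = 0" using t by auto
    define e where "e = (\<lambda>i::nat. if i = 0 then 1 else (0::real))"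
    have me: "mixed_strategy ?S e" unfolding mixed_strategy_def e_def by (simp add: split0)
    have R: "\<And>i. (\<Sum>j\<in>?S. y j * Gt_row A t i j) = (if i = 0 then 1 else 0)"
      using my unfolding mixed_strategy_def Gt_row_def G0_row_def t0 by simp
    have "exp_payoff ?S ?S (Gt_row A t) e y = 1"
      unfolding ep_row R by (simp add: split0 e_def)
    moreover have "exp_payoff ?S ?S (Gt_row A t) x y = x 0"
      unfolding ep_row R by (simp add: split0)
    ultimately show False using brx[OF me] x0 by simp
  qed
  define C where "C i = (\<Sum>j\<in>?S1. y j * A i j)" for i
  have R: "(\<Sum>j\<in>?S. y j * Gt_row A t i j) = t * (- y 0) + t * C i" if "i \<in> ?S1" for i
  proof -
    have "i \<noteq> 0" using that by auto
    then have "(\<Sum>j\<in>?S. y j * Gt_row A t i j) = y 0 * (t * -1) + (\<Sum>j\<in>?S1. y j * (t * A i j))"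
      unfolding Gt_row_def G0_row_def G1_row_def split0 by (intro arg_cong2[where f="(+)"] sum.cong) auto
    also have "\<dots> = t * (- y 0) + t * C i"
      unfolding C_def by (simp add: sum_distrib_left algebra_simps)
    finally show ?thesis .
  qed
  have rowpay: "exp_payoff ?S ?S (Gt_row A t) z y = z 0 * (\<Sum>j\<in>?S. y j * Gt_row A t 0 j)
      + t * (- y 0) * (\<Sum>i\<in>?S1. z i) + t * (\<Sum>i\<in>?S1. z i * C i)" for z
  proof -
    have "exp_payoff ?S ?S (Gt_row A t) z y = z 0 * (\<Sum>j\<in>?S. y j * Gt_row A t 0 j)
       + (\<Sum>i\<in>?S1. z i * (t * (- y 0) + t * C i))"
      unfolding ep_row by (subst split0) (simp add: R)
    also have "\<dots> = z 0 * (\<Sum>j\<in>?S. y j * Gt_row A t 0 j)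
      + t * (- y 0) * (\<Sum>i\<in>?S1. z i) + t * (\<Sum>i\<in>?S1. z i * C i)"
      by (simp add: algebra_simps sum.distrib sum_distrib_left sum_subtractf sum_negf)
    finally show ?thesis .
  qed
  have rowA: "exp_payoff ?S1 ?S1 A z (\<lambda>j. y j / (1 - y 0)) = (\<Sum>i\<in>?S1. z i * C i) / (1 - y 0)" for z
    unfolding ep_row C_def by (simp add: sum_divide_distrib[symmetric])
  define D where "D j = (\<Sum>i\<in>?S1. x i * B i j)" for j
  have Q: "(\<Sum>i\<in>?S. x i * Gt_col B k \<delta> t i j) = t * (x 0 * (3/4)) + t * (D j + (if j = k then \<delta> * x 0 else 0))"
    if "j \<in> ?S1" for j
  proof -
    have "j \<noteq> 0" using that by auto
    then have "(\<Sum>i\<in>?S. x i * Gt_col B k \<delta> t i j) = x 0 * (t * (3/4 + (if j = k then \<delta> else 0))) + (\<Sum>i\<in>?S1. x i * (t * B i j))"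
      unfolding Gt_col_def G0_col_def G1_col_def split0 by (intro arg_cong2[where f="(+)"] sum.cong) auto
    also have "\<dots> = t * (x 0 * (3/4)) + t * (D j + (if j = k then \<delta> * x 0 else 0))"
      unfolding D_def by (simp add: sum_distrib_left algebra_simps)
    finally show ?thesis .
  qed
  have colpay: "exp_payoff ?S ?S (Gt_col B k \<delta> t) x z = z 0 * (\<Sum>i\<in>?S. x i * Gt_col B k \<delta> t i 0)
      + t * (x 0 * (3/4)) * (\<Sum>j\<in>?S1. z j) + t * (\<Sum>j\<in>?S1. z j * (D j + (if j = k then \<delta> * x 0 else 0)))" for z
  proof -
    have "exp_payoff ?S ?S (Gt_col B k \<delta> t) x z = z 0 * (\<Sum>i\<in>?S. x i * Gt_col B k \<delta> t i 0)
       + (\<Sum>j\<in>?S1. z j * (t * (x 0 * (3/4)) + t * (D j + (if j = k then \<delta> * x 0 else 0))))"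
      unfolding ep_col by (subst split0) (simp add: Q)
    also have "\<dots> = z 0 * (\<Sum>i\<in>?S. x i * Gt_col B k \<delta> t i 0)
      + t * (x 0 * (3/4)) * (\<Sum>j\<in>?S1. z j) + t * (\<Sum>j\<in>?S1. z j * (D j + (if j = k then \<delta> * x 0 else 0)))"
      by (simp add: algebra_simps sum.distrib sum_distrib_left sum_subtractf sum_negf)
    finally show ?thesis .
  qed
  have colB: "exp_payoff ?S1 ?S1 (\<lambda>i j. B i j + (if j = k then \<delta> * x 0 / (1 - x 0) else 0)) (\<lambda>i. x i / (1 - x 0)) z
      = (\<Sum>j\<in>?S1. z j * (D j + (if j = k then \<delta> * x 0 else 0))) / (1 - x 0)" for z
  proof -
    have "exp_payoff ?S1 ?S1 (\<lambda>i j. B i j + (if j = k then \<delta> * x 0 / (1 - x 0) else 0)) (\<lambda>i. x i / (1 - x 0)) z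
      = (\<Sum>j\<in>?S1. z j * (\<Sum>i\<in>?S1. x i / (1 - x 0) * (B i j + (if j = k then \<delta> * x 0 / (1 - x 0) else 0))))"
      by (rule ep_col)
    also have "\<dots> = (\<Sum>j\<in>?S1. z j * ((D j + (if j = k then \<delta> * x 0 else 0)) / (1 - x 0)))"
    proof (rule sum.cong[OF refl])
      fix j
      have "(\<Sum>i\<in>?S1. x i / (1 - x 0) * (B i j + (if j = k then \<delta> * x 0 / (1 - x 0) else 0)))
         = (\<Sum>i\<in>?S1. x i * B i j) / (1 - x 0) + (\<Sum>i\<in>?S1. x i) * (if j = k then \<delta> * x 0 / (1 - x 0) else 0) / (1 - x 0)"
        by (simp add: distrib_left sum.distrib sum_divide_distrib sum_distrib_right)
      also have "\<dots> = (D j + (if j = k then \<delta> * x 0 else 0)) / (1 - x 0)"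
        using px unfolding xs1 D_def by (cases "j = k") (simp_all add: add_divide_distrib)
      finally show "z j * (\<Sum>i\<in>?S1. x i / (1 - x 0) * (B i j + (if j = k then \<delta> * x 0 / (1 - x 0) else 0)))
        = z j * ((D j + (if j = k then \<delta> * x 0 else 0)) / (1 - x 0))" by simp
    qed
    also have "\<dots> = (\<Sum>j\<in>?S1. z j * (D j + (if j = k then \<delta> * x 0 else 0))) / (1 - x 0)"
      by (simp add: sum_divide_distrib)
    finally show ?thesis .
  qed
  show ?thesis
    unfolding nash_eq_def
  proof (intro conjI allI impI)
    show "mixed_strategy ?S1 (\<lambda>i. x i / (1 - x 0))"
      unfolding mixed_strategy_def using px xnn
      by (auto simp: sum_divide_distrib[symmetric] xs1[simplified])
    show "mixed_strategy ?S1 (\<lambda>i. y i / (1 - y 0))"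
      unfolding mixed_strategy_def using py ynn
      by (auto simp: sum_divide_distrib[symmetric] ys1[simplified])
  next
    fix p assume mp: "mixed_strategy ?S1 p"
    have pnn: "\<And>i. i \<in> ?S1 \<Longrightarrow> p i \<ge> 0" and ps: "(\<Sum>i\<in>?S1. p i) = 1"
      using mp unfolding mixed_strategy_def by auto
    define z where "z i = (if i = 0 then x 0 else (1 - x 0) * p i)" for i
    have zs: "(\<Sum>i\<in>?S1. z i) = 1 - x 0" and zc: "(\<Sum>i\<in>?S1. z i * C i) = (1 - x 0) * (\<Sum>i\<in>?S1. p i * C i)"
      unfolding z_def using ps by (auto simp: sum_distrib_left[symmetric] mult.assoc intro!: sum.cong)
    have "mixed_strategy ?S z"
      unfolding mixed_strategy_def
    proof
      show "\<forall>i\<in>?S. 0 \<le> z i" using pnn px x00 unfolding z_def by auto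
      show "sum z ?S = 1" using zs by (simp add: split0 z_def)
    qed
    from brx[OF this] have "t * ((1 - x 0) * (\<Sum>i\<in>?S1. p i * C i)) \<le> t * (\<Sum>i\<in>?S1. x i * C i)"
      unfolding rowpay zs zc xs1 by (simp add: z_def)
    then have "(1 - x 0) * (\<Sum>i\<in>?S1. p i * C i) \<le> (\<Sum>i\<in>?S1. x i * C i)"
      using tpos by simp
    then have "(\<Sum>i\<in>?S1. p i * C i) \<le> (\<Sum>i\<in>?S1. x i / (1 - x 0) * C i)"
      using px by (simp add: sum_divide_distrib[symmetric] field_simps)
    then show "exp_payoff ?S1 ?S1 A p (\<lambda>j. y j / (1 - y 0)) \<le> exp_payoff ?S1 ?S1 A (\<lambda>i. x i / (1 - x 0)) (\<lambda>j. y j / (1 - y 0))"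
      unfolding rowA using py by (simp add: divide_right_mono)
  next
    fix p assume mp: "mixed_strategy ?S1 p"
    have pnn: "\<And>i. i \<in> ?S1 \<Longrightarrow> p i \<ge> 0" and ps: "(\<Sum>i\<in>?S1. p i) = 1"
      using mp unfolding mixed_strategy_def by auto
    define E where "E j = D j + (if j = k then \<delta> * x 0 else 0)" for j
    define z where "z i = (if i = 0 then y 0 else (1 - y 0) * p i)" for i
    have zs: "(\<Sum>i\<in>?S1. z i) = 1 - y 0" and zc: "(\<Sum>i\<in>?S1. z i * E i) = (1 - y 0) * (\<Sum>i\<in>?S1. p i * E i)"
      unfolding z_def using ps by (auto simp: sum_distrib_left[symmetric] mult.assoc intro!: sum.cong)
    have "mixed_strategy ?S z"
      unfolding mixed_strategy_def
    proof
      show "\<forall>i\<in>?S. 0 \<le> z i" using pnn py ynn unfolding z_def by auto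
      show "sum z ?S = 1" using zs by (simp add: split0 z_def)
    qed
    from bry[OF this] have "t * ((1 - y 0) * (\<Sum>i\<in>?S1. p i * E i)) \<le> t * (\<Sum>i\<in>?S1. y i * E i)"
      unfolding colpay E_def[symmetric] zs zc ys1 by (simp add: z_def)
    then have "(1 - y 0) * (\<Sum>i\<in>?S1. p i * E i) \<le> (\<Sum>i\<in>?S1. y i * E i)"
      using tpos by simp
    then have "(\<Sum>i\<in>?S1. p i * E i) \<le> (\<Sum>i\<in>?S1. y i / (1 - y 0) * E i)"
      using py by (simp add: sum_divide_distrib[symmetric] field_simps)
    then show "exp_payoff ?S1 ?S1 (\<lambda>i j. B i j + (if j = k then \<delta> * x 0 / (1 - x 0) else 0)) (\<lambda>i. x i / (1 - x 0)) p
      \<le> exp_payoff ?S1 ?S1 (\<lambda>i j. B i j + (if j = k then \<delta> * x 0 / (1 - x 0) else 0)) (\<lambda>i. x i / (1 - x 0)) (\<lambda>j. y j / (1 - y 0))"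
      unfolding colB E_def[symmetric] using px by (simp add: divide_right_mono)
  qed
qed

end
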